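(* Let $\varphi$ be an Orlicz $N$-function with Young–Fenchel transform $\psi$ and let $q_\varphi$ be the generalized inverse of the density of $\varphi$. Let $\{X_{k,n},k\ge1,n\ge1\}$ be a double array of independent $\varphi$-subgaussian random variables with $\sup_{k,n\in\mathbb N}\tau_\varphi(X_{k,n})\le1$. Let $\kappa$ be a positive increasing differentiable function whose derivative $r=\kappa'$ is non-decreasing on $(0,\infty)$, and suppose $\psi(x)-\kappa(x)\ge C_0(x)$ for some function $C_0$. Assume there is $C>0$ such that for every $k,n\ge1$ and $x>0$ $$P(X_{k,n}<x)\le\exp\left(-C\exp(-\kappa(x))\right).$$ Suppose there exist constants $A,\varepsilon_0>0$ such that for every $\varepsilon\in(0,\varepsilon_0]$ $$\int_A^{+\infty}\exp\left(-\frac{Cy}{2}\exp\left(-\kappa(\psi^{-1}(\ln y)-\varepsilon)\right)\right)dy<+\infty$$ and $$\int_A^{+\infty}\psi(y)q_\varphi(y)\exp\left(\psi(y)-\frac C2\exp\left(C_0(y)+\varepsilon r(y-\varepsilon)\right)\right)dy<+\infty.$$ Then $$\lim_{m\vee j\to+\infty}\left(\max_{1\le k\le m,1\le n\le j}X_{k,n}-\psi^{-1}(\ln(mj))\right)^-=0\quad\text{a.s.}$$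
   Context: An Orlicz $N$-function is a continuous even convex function $\varphi:\mathbb R\to\mathbb R$ with $\varphi(0)=0$, increasing on $(0,\infty)$, with $\varphi(x)/x\to0$ as $x\to0$ and $\varphi(x)/x\to+\infty$ as $x\to+\infty$. It can be written $\varphi(x)=\int_0^{|x|}p_\varphi(t)\,dt$ with non-decreasing density $p_\varphi$; its generalized inverse is $q_\varphi(t)=\sup\{u\ge0:p_\varphi(u)\le t\}$. The Young–Fenchel transform is $\psi(x)=\sup_{y\in\mathbb R}(xy-\varphi(y))$, with $\psi(x)=\int_0^{|x|}q_\varphi(t)dt$; $\psi^{-1}$ is the inverse of $\psi$ on $[0,\infty)$. A random variable $X$ is $\varphi$-subgaussian if $EX=0$ and there is a finite $a>0$ with $E\exp(tX)\le\exp(\varphi(at))$ for all $t$; $\tau_\varphi(X)=\inf\{a>0:E\exp(tX)\le\exp(\varphi(at))\ \forall t\}$. $u^-=\max(-u,0)$. $\lim_{m\vee j\to\infty}b_{m,j}=b$ means: for every $\varepsilon>0$ there is $N$ with $|b_{m,j}-b|<\varepsilon$ whenever $\max(m,j)\ge N$. *)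

theory Defs
  imports "HOL-Probability.Probability"
begin

definition orlicz_N_function :: "(real \<Rightarrow> real) \<Rightarrow> bool" where
  "orlicz_N_function \<phi> \<longleftrightarrow>
     continuous_on UNIV \<phi> \<and> (\<forall>x. \<phi> (- x) = \<phi> x) \<and> convex_on UNIV \<phi> \<and> \<phi> 0 = 0 \<and>
     strict_mono_on {0<..} \<phi> \<and>
     ((\<lambda>x. \<phi> x / x) \<longlongrightarrow> 0) (at_right 0) \<and>
     filterlim (\<lambda>x. \<phi> x / x) at_top at_top"

definition orlicz_density :: "(real \<Rightarrow> real) \<Rightarrow> (real \<Rightarrow> real) \<Rightarrow> bool" where
  "orlicz_density \<phi> p \<longleftrightarrow> mono_on {0..} p \<and> (\<forall>x. (p has_integral \<phi> x) {0..\<bar>x\<bar>})"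

definition gen_inv :: "(real \<Rightarrow> real) \<Rightarrow> real \<Rightarrow> real" where
  "gen_inv p t = Sup {u. 0 \<le> u \<and> p u \<le> t}"

definition young_fenchel :: "(real \<Rightarrow> real) \<Rightarrow> real \<Rightarrow> real" where
  "young_fenchel \<phi> x = (SUP y. x * y - \<phi> y)"

definition inv_pos :: "(real \<Rightarrow> real) \<Rightarrow> real \<Rightarrow> real" where
  "inv_pos \<psi> t = (THE x. 0 \<le> x \<and> \<psi> x = t)"

definition subg_bound :: "'a measure \<Rightarrow> (real \<Rightarrow> real) \<Rightarrow> ('a \<Rightarrow> real) \<Rightarrow> real \<Rightarrow> bool" where
  "subg_bound M \<phi> X a \<longleftrightarrow>
     (\<forall>t. integrable M (\<lambda>\<omega>. exp (t * X \<omega>)) \<and>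
          (\<integral>\<omega>. exp (t * X \<omega>) \<partial>M) \<le> exp (\<phi> (a * t)))"

definition phi_subgaussian :: "'a measure \<Rightarrow> (real \<Rightarrow> real) \<Rightarrow> ('a \<Rightarrow> real) \<Rightarrow> bool" where
  "phi_subgaussian M \<phi> X \<longleftrightarrow>
     X \<in> borel_measurable M \<and> integrable M X \<and> (\<integral>\<omega>. X \<omega> \<partial>M) = 0 \<and>
     (\<exists>a>0. subg_bound M \<phi> X a)"

definition tau_phi :: "'a measure \<Rightarrow> (real \<Rightarrow> real) \<Rightarrow> ('a \<Rightarrow> real) \<Rightarrow> real" where
  "tau_phi M \<phi> X = Inf {a. a > 0 \<and> subg_bound M \<phi> X a}"

definition neg_part :: "real \<Rightarrow> real" where
  "neg_part u = max (- u) 0"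

end

theory Submission
  imports Defs
begin


lemma phi_nonneg:
  assumes "orlicz_N_function \<phi>" shows "\<phi> y \<ge> 0"
proof -
  have c: "convex_on UNIV \<phi>" and e: "\<phi> (-y) = \<phi> y" and z: "\<phi> 0 = 0"
    using assms unfolding orlicz_N_function_def by auto
  have "\<phi> ((1 - 1/2) *\<^sub>R y + (1/2) *\<^sub>R (-y)) \<le> (1 - 1/2) * \<phi> y + (1/2) * \<phi> (-y)"
    by (rule convex_onD[OF c]) auto
  then show ?thesis using e z by simp
qed

lemma yf_bdd:
  assumes "orlicz_N_function \<phi>" shows "bdd_above (range (\<lambda>y. x * y - \<phi> y))"
proof -
  have ev: "filterlim (\<lambda>x. \<phi> x / x) at_top at_top" and e: "\<And>y. \<phi> (-y) = \<phi> y"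
    using assms unfolding orlicz_N_function_def by auto
  have "eventually (\<lambda>y. \<bar>x\<bar> + 1 \<le> \<phi> y / y) at_top"
    using ev by (simp add: filterlim_at_top)
  then obtain N where N: "\<And>y. y \<ge> N \<Longrightarrow> \<bar>x\<bar> + 1 \<le> \<phi> y / y"
    by (auto simp: eventually_at_top_linorder)
  define Y where "Y = max N 1"
  have Yp: "Y > 0" unfolding Y_def by auto
  have big: "\<phi> y \<ge> (\<bar>x\<bar> + 1) * y" if "y \<ge> Y" for y
  proof -
    have "y > 0" "y \<ge> N" using that Yp unfolding Y_def by auto
    with N[of y] show ?thesis by (simp add: field_simps)
  qed
  have bnd: "x * y - \<phi> y \<le> \<bar>x\<bar> * Y" for y
  proof -
    have p: "\<phi> y \<ge> 0" by (rule phi_nonneg[OF assms])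
    have xy: "x * y \<le> \<bar>x\<bar> * \<bar>y\<bar>"
      by (metis abs_ge_self abs_mult)
    show ?thesis
    proof (cases "\<bar>y\<bar> \<le> Y")
      case True
      then have "\<bar>x\<bar> * \<bar>y\<bar> \<le> \<bar>x\<bar> * Y" by (simp add: mult_left_mono)
      then show ?thesis using xy p by linarith
    next
      case False
      then have "\<bar>y\<bar> \<ge> Y" by simp
      then have "\<phi> \<bar>y\<bar> \<ge> (\<bar>x\<bar> + 1) * \<bar>y\<bar>" by (rule big)
      moreover have "\<phi> \<bar>y\<bar> = \<phi> y" using e by (cases "y \<ge> 0") auto
      ultimately have "\<phi> y \<ge> \<bar>x\<bar> * \<bar>y\<bar>" by (simp add: algebra_simps)
      then show ?thesis using xy Yp by (smt (verit) abs_ge_zero mult_nonneg_nonneg)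
    qed
  qed
  show ?thesis by (rule bdd_aboveI2, rule bnd)
qed

lemma yf_ge:
  assumes "orlicz_N_function \<phi>" shows "young_fenchel \<phi> x \<ge> x * y - \<phi> y"
  unfolding young_fenchel_def by (rule cSUP_upper[OF _ yf_bdd[OF assms]]) auto

lemma yf_le:
  assumes "\<And>y. x * y - \<phi> y \<le> B" shows "young_fenchel \<phi> x \<le> B"
  unfolding young_fenchel_def by (rule cSUP_least) (auto intro: assms)

lemma yf_zero:
  assumes "orlicz_N_function \<phi>" shows "young_fenchel \<phi> 0 = 0"
proof -
  have "young_fenchel \<phi> 0 \<le> 0" by (rule yf_le) (use phi_nonneg[OF assms] in auto)
  moreover have "young_fenchel \<phi> 0 \<ge> 0 * 0 - \<phi> 0" by (rule yf_ge[OF assms])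
  ultimately show ?thesis using assms unfolding orlicz_N_function_def by auto
qed

lemma yf_pos:
  assumes "orlicz_N_function \<phi>" "x > 0" shows "young_fenchel \<phi> x > 0"
proof -
  have "((\<lambda>x. \<phi> x / x) \<longlongrightarrow> 0) (at_right 0)"
    using assms unfolding orlicz_N_function_def by auto
  then have "eventually (\<lambda>y. \<phi> y / y < x) (at_right 0)"
    using assms(2) by (intro order_tendstoD) auto
  then obtain b where b: "b > 0" "\<And>y. y > 0 \<Longrightarrow> y < b \<Longrightarrow> \<phi> y / y < x"
    by (auto simp: eventually_at_right_field)
  define y where "y = b / 2"
  have y: "y > 0" "y < b" using b unfolding y_def by auto
  then have "\<phi> y / y < x" using b by auto
  then have "\<phi> y < x * y" using y by (simp add: field_simps)
  moreover have "young_fenchel \<phi> x \<ge> x * y - \<phi> y" by (rule yf_ge[OF assms(1)])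
  ultimately show ?thesis by linarith
qed

lemma yf_scale:
  assumes "orlicz_N_function \<phi>" "0 \<le> l" "l \<le> 1"
  shows "young_fenchel \<phi> (l * v) \<le> l * young_fenchel \<phi> v"
proof (rule yf_le)
  fix y
  have "l * v * y - \<phi> y \<le> l * (v * y - \<phi> y)"
    using phi_nonneg[OF assms(1), of y] assms by (simp add: algebra_simps mult_left_le_one_le)
  also have "\<dots> \<le> l * young_fenchel \<phi> v"
    using yf_ge[OF assms(1)] assms(2) by (intro mult_left_mono) auto
  finally show "l * v * y - \<phi> y \<le> l * young_fenchel \<phi> v" .
qed

lemma yf_convex:
  assumes "orlicz_N_function \<phi>" shows "convex_on UNIV (young_fenchel \<phi>)"
proof (rule convex_onI)
  fix t x z :: real assume t: "t > 0" "t < 1"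
  show "young_fenchel \<phi> ((1 - t) *\<^sub>R x + t *\<^sub>R z)
        \<le> (1 - t) * young_fenchel \<phi> x + t * young_fenchel \<phi> z"
  proof (rule yf_le)
    fix y
    have "((1 - t) *\<^sub>R x + t *\<^sub>R z) * y - \<phi> y = (1 - t) * (x * y - \<phi> y) + t * (z * y - \<phi> y)"
      by (simp add: algebra_simps)
    also have "\<dots> \<le> (1 - t) * young_fenchel \<phi> x + t * young_fenchel \<phi> z"
      using t yf_ge[OF assms] by (intro add_mono mult_left_mono) auto
    finally show "((1 - t) *\<^sub>R x + t *\<^sub>R z) * y - \<phi> y \<le> (1 - t) * young_fenchel \<phi> x + t * young_fenchel \<phi> z" .
  qed
qed auto

lemma yf_cont:
  assumes "orlicz_N_function \<phi>" shows "continuous_on UNIV (young_fenchel \<phi>)"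
  by (rule convex_on_continuous[OF open_UNIV yf_convex[OF assms]])

lemma yf_strict:
  assumes "orlicz_N_function \<phi>" "0 \<le> u" "u < v"
  shows "young_fenchel \<phi> u < young_fenchel \<phi> v"
proof -
  have v: "v > 0" using assms by auto
  have "young_fenchel \<phi> ((u / v) * v) \<le> (u / v) * young_fenchel \<phi> v"
    using assms v by (intro yf_scale) auto
  then have "young_fenchel \<phi> u \<le> (u / v) * young_fenchel \<phi> v" using v by simp
  moreover have "young_fenchel \<phi> v > 0" using yf_pos[OF assms(1) v] .
  moreover have "u / v < 1" using assms v by simp
  ultimately show ?thesis
    by (smt (verit, best) mult_less_cancel_right2)
qed

lemma inv_pos_props:
  assumes "orlicz_N_function \<phi>" "L \<ge> 0"
  shows "inv_pos (young_fenchel \<phi>) L \<ge> 0 \<and> young_fenchel \<phi> (inv_pos (young_fenchel \<phi>) L) = L"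
proof -
  let ?\<psi> = "young_fenchel \<phi>"
  have "\<exists>x\<ge>0. x \<le> L + \<phi> 1 \<and> ?\<psi> x = L"
  proof (rule IVT')
    show "?\<psi> 0 \<le> L" using yf_zero[OF assms(1)] assms by simp
    show "L \<le> ?\<psi> (L + \<phi> 1)" using yf_ge[OF assms(1), of "L + \<phi> 1" 1] by simp
    show "0 \<le> L + \<phi> 1" using phi_nonneg[OF assms(1), of 1] assms by simp
    show "continuous_on {0..L + \<phi> 1} ?\<psi>"
      using yf_cont[OF assms(1)] by (rule continuous_on_subset) auto
  qed
  then obtain x where x: "0 \<le> x" "?\<psi> x = L" by auto
  have "0 \<le> (THE x. 0 \<le> x \<and> ?\<psi> x = L) \<and> ?\<psi> (THE x. 0 \<le> x \<and> ?\<psi> x = L) = L"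
  proof (rule theI[of _ x])
    show "0 \<le> x \<and> ?\<psi> x = L" using x by auto
    fix y assume y: "0 \<le> y \<and> ?\<psi> y = L"
    show "y = x"
    proof (rule ccontr)
      assume "y \<noteq> x"
      then have "y < x \<or> x < y" by auto
      then show False using yf_strict[OF assms(1)] x y by fastforce
    qed
  qed
  then show ?thesis unfolding inv_pos_def .
qed

lemma inv_pos_mono:
  assumes "orlicz_N_function \<phi>" "0 \<le> L" "L \<le> L'"
  shows "inv_pos (young_fenchel \<phi>) L \<le> inv_pos (young_fenchel \<phi>) L'"
proof (rule ccontr)
  let ?B = "inv_pos (young_fenchel \<phi>)"
  assume "\<not> ?thesis"
  then have "?B L' < ?B L" by simp
  then have "young_fenchel \<phi> (?B L') < young_fenchel \<phi> (?B L)"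
    using inv_pos_props[OF assms(1), of L'] assms by (intro yf_strict[OF assms(1)]) auto
  then show False using inv_pos_props[OF assms(1), of L'] inv_pos_props[OF assms(1), of L] assms by auto
qed

lemma inv_pos_large:
  assumes "orlicz_N_function \<phi>" "young_fenchel \<phi> U < L" "U \<ge> 0"
  shows "U < inv_pos (young_fenchel \<phi>) L"
proof (rule ccontr)
  let ?B = "inv_pos (young_fenchel \<phi>)"
  have L0: "L \<ge> 0" using yf_strict[OF assms(1), of 0 U] yf_zero[OF assms(1)] assms by (cases "U = 0") auto
  assume "\<not> ?thesis"
  then have "?B L \<le> U" by simp
  then have "young_fenchel \<phi> (?B L) \<le> young_fenchel \<phi> U"
    using inv_pos_props[OF assms(1) L0] yf_strict[OF assms(1), of "?B L" U] by (cases "?B L = U") auto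
  then show False using inv_pos_props[OF assms(1) L0] assms by auto
qed

lemma inv_pos_incr:
  assumes "orlicz_N_function \<phi>" "c \<ge> 0" "d > 0"
  shows "\<exists>L0. \<forall>L\<ge>L0. inv_pos (young_fenchel \<phi>) (L + c) \<le> inv_pos (young_fenchel \<phi>) L + d"
proof -
  let ?B = "inv_pos (young_fenchel \<phi>)"
  let ?\<psi> = "young_fenchel \<phi>"
  define K where "K = 2 * c / d + 1"
  have Kp: "K > 0" "K * d \<ge> 2 * c" using assms unfolding K_def by (auto simp: field_simps)
  show ?thesis
  proof (intro exI allI impI)
    fix L assume L: "max 1 (\<phi> K) \<le> L"
    define u where "u = ?B L"
    define v where "v = ?B (L + c)"
    have L1: "L \<ge> 1" "L \<ge> \<phi> K" using L by auto
    have u: "u \<ge> 0" "?\<psi> u = L" using inv_pos_props[OF assms(1), of L] L1 unfolding u_def by auto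
    have v: "v \<ge> 0" "?\<psi> v = L + c" using inv_pos_props[OF assms(1), of "L + c"] L1 assms unfolding v_def by auto
    have uv: "u \<le> v" unfolding u_def v_def using L1 assms by (intro inv_pos_mono[OF assms(1)]) auto
    have up: "u > 0" using u L1 yf_zero[OF assms(1)] by (cases "u = 0") auto
    have "?\<psi> ((u / v) * v) \<le> (u / v) * ?\<psi> v"
      using uv up by (intro yf_scale[OF assms(1)]) auto
    then have "L \<le> (u / v) * (L + c)" using u v up uv by simp
    then have "L * v \<le> u * (L + c)" using up uv by (simp add: field_simps)
    then have A1: "L * (v - u) \<le> u * c" by (simp add: algebra_simps)
    have "L \<ge> K * u - \<phi> K" using yf_ge[OF assms(1), of u K] u by (simp add: mult.commute)
    then have "K * u \<le> 2 * L" using L1 by linarith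
    then have "K * (u * c) \<le> 2 * L * c" using assms by (simp add: mult_right_mono mult.assoc[symmetric])
    also have "\<dots> \<le> K * d * L" using Kp L1 by (simp add: mult_right_mono mult.commute)
    finally have "u * c \<le> d * L" using Kp by (simp add: mult.assoc mult.commute mult.left_commute)
    with A1 have "L * (v - u) \<le> L * d" by (simp add: mult.commute)
    then have "v - u \<le> d" using L1 by simp
    then show "?B (L + c) \<le> ?B L + d" unfolding u_def v_def by simp
  qed
qed



lemma (in prob_space) rect_bound:
  fixes X :: "nat \<Rightarrow> nat \<Rightarrow> 'a \<Rightarrow> real"
  assumes ind: "indep_vars (\<lambda>_. borel) (\<lambda>(k, n). X k n) ({1::nat..} \<times> {1::nat..})"
    and tail: "\<forall>k\<ge>1. \<forall>n\<ge>1. \<forall>x>0. measure M {\<omega> \<in> space M. X k n \<omega> < x} \<le> exp (- C * exp (- \<kappa> x))"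
    and x: "x > 0" and R: "finite R" "R \<noteq> {}" "R \<subseteq> {1::nat..} \<times> {1::nat..}"
  shows "(\<Inter>(k, n)\<in>R. {\<omega> \<in> space M. X k n \<omega> < x}) \<in> events"
    and "prob (\<Inter>(k, n)\<in>R. {\<omega> \<in> space M. X k n \<omega> < x}) \<le> exp (- C * exp (- \<kappa> x)) ^ card R"
proof -
  have meas: "X k n \<in> borel_measurable M" if "(k, n) \<in> R" for k n
  proof -
    have "(k, n) \<in> {1::nat..} \<times> {1::nat..}" using that R by auto
    then have "random_variable borel ((\<lambda>(k, n). X k n) (k, n))"
      using ind unfolding indep_vars_def2 by blast
    then show ?thesis by simp
  qed
  have eq: "(\<Inter>(k, n)\<in>R. {\<omega> \<in> space M. X k n \<omega> < x})
      = (\<Inter>i\<in>R. (\<lambda>(k, n). X k n) i -` {..<x} \<inter> space M)"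
    by auto
  show "(\<Inter>(k, n)\<in>R. {\<omega> \<in> space M. X k n \<omega> < x}) \<in> events"
    unfolding eq using R meas
    by (intro sets.finite_INT) (auto intro!: measurable_sets[of _ M borel])
  have "prob (\<Inter>i\<in>R. (\<lambda>(k, n). X k n) i -` {..<x} \<inter> space M)
      = (\<Prod>i\<in>R. prob ((\<lambda>(k, n). X k n) i -` {..<x} \<inter> space M))"
    using R by (intro indep_varsD[OF ind]) auto
  also have "\<dots> \<le> (\<Prod>i\<in>R. exp (- C * exp (- \<kappa> x)))"
  proof (rule prod_mono)
    fix i assume i: "i \<in> R"
    then obtain k n where kn: "i = (k, n)" "k \<ge> 1" "n \<ge> 1" using R by auto
    have "(\<lambda>(k, n). X k n) i -` {..<x} \<inter> space M = {\<omega> \<in> space M. X k n \<omega> < x}"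
      using kn by auto
    then show "0 \<le> prob ((\<lambda>(k, n). X k n) i -` {..<x} \<inter> space M) \<and>
          prob ((\<lambda>(k, n). X k n) i -` {..<x} \<inter> space M) \<le> exp (- C * exp (- \<kappa> x))"
      using tail kn x by auto
  qed
  also have "\<dots> = exp (- C * exp (- \<kappa> x)) ^ card R" by simp
  finally show "prob (\<Inter>(k, n)\<in>R. {\<omega> \<in> space M. X k n \<omega> < x}) \<le> exp (- C * exp (- \<kappa> x)) ^ card R"
    unfolding eq .
qed



lemma integral_piece:
  fixes \<phi> \<kappa> :: "real \<Rightarrow> real"
  defines "B \<equiv> inv_pos (young_fenchel \<phi>)"
  assumes phi: "orlicz_N_function \<phi>"
    and kap: "strict_mono_on {0<..} \<kappa>" and C: "C > 0"
    and fin: "(\<integral>\<^sup>+ y. ennreal (exp (- (C * y / 2) *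
               exp (- \<kappa> (B (ln y) - \<delta> / 2)))) * indicator {A..} y \<partial>lborel) < \<infinity>"
    and i: "i \<ge> 1" "(2::real) ^ (i - 1) \<ge> A"
    and step: "B (ln ((2::real) ^ (i - 1)) + ln 2) \<le> B (ln ((2::real) ^ (i - 1))) + \<delta> / 2"
    and pos: "B (ln ((2::real) ^ i)) - \<delta> > 0"
  shows "exp (- (C * 2 ^ i / 2) * exp (- \<kappa> (B (ln ((2::real) ^ i)) - \<delta>))) * 2 ^ i
     \<le> 2 * enn2real (\<integral>\<^sup>+ y. ennreal (exp (- (C * y / 2) *
               exp (- \<kappa> (B (ln y) - \<delta> / 2)))) * indicator {A..} y \<partial>lborel)"
proof -
  define lo :: real where "lo = 2 ^ (i - 1)"
  define hi :: real where "hi = 2 ^ i"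
  define e where "e = exp (- \<kappa> (B (ln hi) - \<delta>))"
  define g where "g = exp (- (C * hi / 2) * e)"
  define f where "f = (\<lambda>y. exp (- (C * y / 2) * exp (- \<kappa> (B (ln y) - \<delta> / 2))))"
  define I where "I = (\<integral>\<^sup>+ y. ennreal (f y) * indicator {A..} y \<partial>lborel)"
  have hilo: "hi = 2 * lo" unfolding hi_def lo_def using i by (cases i) auto
  have lo1: "lo \<ge> 1" unfolding lo_def by simp
  have lnhi: "ln hi = ln lo + ln 2" using hilo lo1 by (simp add: ln_mult)
  have gf: "g \<le> f y" if y: "y \<in> {lo..hi}" for y
  proof -
    have "ln y \<ge> ln lo" using y lo1 by auto
    moreover have "ln lo \<ge> 0" using lo1 by simp
    ultimately have "B (ln lo) \<le> B (ln y)" unfolding B_def by (intro inv_pos_mono[OF phi]) auto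
    moreover have "B (ln hi) \<le> B (ln lo) + \<delta> / 2" using step lnhi unfolding lo_def B_def by simp
    ultimately have "B (ln hi) - \<delta> \<le> B (ln y) - \<delta> / 2" by simp
    moreover have "B (ln hi) - \<delta> > 0" using pos unfolding hi_def by simp
    ultimately have "\<kappa> (B (ln hi) - \<delta>) \<le> \<kappa> (B (ln y) - \<delta> / 2)"
      by (intro strict_mono_on_leD[OF kap]) auto
    then have E: "exp (- \<kappa> (B (ln y) - \<delta> / 2)) \<le> e" unfolding e_def by simp
    have "C * y / 2 \<le> C * hi / 2" using y C by auto
    moreover have "C * y / 2 \<ge> 0" using y lo1 C by auto
    ultimately have "(C * y / 2) * exp (- \<kappa> (B (ln y) - \<delta> / 2)) \<le> (C * hi / 2) * e"
      using E by (intro mult_mono) auto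
    then show ?thesis unfolding g_def f_def by simp
  qed
  have "ennreal (g * (hi - lo)) = (\<integral>\<^sup>+ y. ennreal g * indicator {lo..hi} y \<partial>lborel)"
    using hilo lo1 by (simp add: nn_integral_cmult_indicator ennreal_mult' g_def)
  also have "\<dots> \<le> I" unfolding I_def
  proof (rule nn_integral_mono)
    fix y
    show "ennreal g * indicator {lo..hi} y \<le> ennreal (f y) * indicator {A..} y"
    proof (cases "y \<in> {lo..hi}")
      case True
      then have "y \<in> {A..}" using i unfolding lo_def by auto
      then show ?thesis using True gf by (simp add: ennreal_leI)
    qed simp
  qed
  finally have le: "ennreal (g * (hi - lo)) \<le> I" .
  have Ifin: "I < \<infinity>" using fin unfolding I_def f_def .
  have g0: "g * (hi - lo) \<ge> 0" using hilo lo1 unfolding g_def by simp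
  have "enn2real (ennreal (g * (hi - lo))) \<le> enn2real I"
    using le Ifin by (intro enn2real_mono) auto
  then have "g * (hi - lo) \<le> enn2real I" using g0 by simp
  then have "g * hi \<le> 2 * enn2real I" using hilo by simp
  then show ?thesis unfolding g_def hi_def e_def I_def f_def by simp
qed



lemma (in prob_space) per_delta:
  fixes \<phi> \<kappa> :: "real \<Rightarrow> real" and X :: "nat \<Rightarrow> nat \<Rightarrow> 'a \<Rightarrow> real"
  defines "B \<equiv> inv_pos (young_fenchel \<phi>)"
  assumes phi: "orlicz_N_function \<phi>"
    and ind: "indep_vars (\<lambda>_. borel) (\<lambda>(k, n). X k n) ({1::nat..} \<times> {1::nat..})"
    and kap: "strict_mono_on {0<..} \<kappa>" and C: "C > 0"
    and tail: "\<forall>k\<ge>1. \<forall>n\<ge>1. \<forall>x>0. measure M {\<omega> \<in> space M. X k n \<omega> < x} \<le> exp (- C * exp (- \<kappa> x))"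
    and fin: "(\<integral>\<^sup>+ y. ennreal (exp (- (C * y / 2) *
               exp (- \<kappa> (B (ln y) - \<delta> / 2)))) * indicator {A..} y \<partial>lborel) < \<infinity>"
    and d: "\<delta> > 0"
  shows "AE \<omega> in M. \<exists>N. \<forall>m j. 1 \<le> m \<longrightarrow> 1 \<le> j \<longrightarrow> max m j \<ge> N \<longrightarrow>
           neg_part (Max {X k n \<omega> | k n. k \<in> {1..m} \<and> n \<in> {1..j}}
                      - B (ln (real (m * j)))) \<le> 2 * \<delta>"
proof -
  define I where "I = enn2real (\<integral>\<^sup>+ y. ennreal (exp (- (C * y / 2) *
               exp (- \<kappa> (B (ln y) - \<delta> / 2)))) * indicator {A..} y \<partial>lborel)"
  obtain L1 where L1: "\<And>L. L \<ge> L1 \<Longrightarrow> B (L + ln 4) \<le> B L + \<delta>"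
    using inv_pos_incr[OF phi, of "ln 4" \<delta>] d unfolding B_def by auto
  obtain L2 where L2: "\<And>L. L \<ge> L2 \<Longrightarrow> B (L + ln 2) \<le> B L + \<delta> / 2"
    using inv_pos_incr[OF phi, of "ln 2" "\<delta> / 2"] d unfolding B_def by auto
  define L3 where "L3 = young_fenchel \<phi> \<delta> + 1"
  have L3: "\<And>L. L \<ge> L3 \<Longrightarrow> \<delta> < B L"
    unfolding B_def L3_def using d by (intro inv_pos_large[OF phi]) auto
  define T where "T = max (max L1 L2) (max L3 0)"
  obtain n0 :: nat where n0: "T / ln 2 < real n0" using reals_Archimedean2 by blast
  obtain n1 :: nat where n1: "A < real n1" using reals_Archimedean2 by blast
  define i0 where "i0 = n0 + n1 + 1"
  have lnT: "ln ((2::real) ^ k) \<ge> T" if "k \<ge> n0" for k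
  proof -
    have "T \<le> real n0 * ln 2" using n0 by (simp add: field_simps)
    also have "\<dots> \<le> real k * ln 2" using that by (intro mult_right_mono) auto
    finally show ?thesis by (simp add: ln_realpow)
  qed
  have goodi: "i \<ge> 1 \<and> (2::real) ^ (i - 1) \<ge> A
      \<and> B (ln ((2::real) ^ (i - 1)) + ln 2) \<le> B (ln ((2::real) ^ (i - 1))) + \<delta> / 2
      \<and> B (ln ((2::real) ^ i)) - \<delta> > 0
      \<and> B (ln ((2::real) ^ i) + ln 4) \<le> B (ln ((2::real) ^ i)) + \<delta>" if i: "i \<ge> i0" for i
  proof (intro conjI)
    show "i \<ge> 1" using i unfolding i0_def by auto
    have "A < real n1" by (fact n1)
    also have "\<dots> \<le> real (i - 1)" using i unfolding i0_def by auto
    also have "\<dots> < 2 ^ (i - 1)" by (metis of_nat_less_numeral_power_cancel_iff less_exp of_nat_numeral)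
    finally show "(2::real) ^ (i - 1) \<ge> A" by simp
    have "ln ((2::real) ^ (i - 1)) \<ge> T" using i unfolding i0_def by (intro lnT) auto
    then show "B (ln ((2::real) ^ (i - 1)) + ln 2) \<le> B (ln ((2::real) ^ (i - 1))) + \<delta> / 2"
      unfolding T_def by (intro L2) auto
    have lt: "ln ((2::real) ^ i) \<ge> T" using i unfolding i0_def by (intro lnT) auto
    then show "B (ln ((2::real) ^ i)) - \<delta> > 0" using L3[of "ln ((2::real) ^ i)"] unfolding T_def by auto
    show "B (ln ((2::real) ^ i) + ln 4) \<le> B (ln ((2::real) ^ i)) + \<delta>"
      using lt unfolding T_def by (intro L1) auto
  qed
  define F where "F = (\<lambda>a c. \<Inter>(k, n)\<in>{1..(2::nat)^a} \<times> {1..(2::nat)^c}.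
      {\<omega> \<in> space M. X k n \<omega> < B (ln ((2::real) ^ (a + c))) - \<delta>})"
  define G where "G = (\<lambda>i. \<Union>a\<in>{..i}. F a (i - a))"
  have Fev: "F a c \<in> events" for a c
  proof (cases "B (ln ((2::real) ^ (a + c))) - \<delta> > 0")
    case True
    show ?thesis unfolding F_def
      by (rule rect_bound(1)[OF ind tail True]) (auto simp: Suc_le_eq)
  next
    case False
    have meas: "X k n \<in> borel_measurable M" if "k \<ge> 1" "n \<ge> 1" for k n
    proof -
      have "random_variable borel ((\<lambda>(k, n). X k n) (k, n))"
        using ind that unfolding indep_vars_def2 by auto
      then show ?thesis by simp
    qed
    have ms: "{\<omega> \<in> space M. X k n \<omega> < t} \<in> events" if "k \<ge> 1" "n \<ge> 1" for k n t
      using meas[OF that] by measurable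
    show ?thesis unfolding F_def
      by (intro sets.finite_INT) (auto intro!: ms simp: Suc_le_eq)
  qed
  have Gev: "G i \<in> events" for i unfolding G_def using Fev by auto
  define gi where "gi = (\<lambda>i. exp (- (C * 2 ^ i / 2) * exp (- \<kappa> (B (ln ((2::real) ^ i)) - \<delta>))))"
  have gi_le: "gi i * 2 ^ i \<le> 2 * I" if "i \<ge> i0" for i
    using goodi[OF that] unfolding gi_def I_def B_def
    by (intro integral_piece[OF phi kap C]) (use fin in \<open>auto simp: B_def\<close>)
  have Fb: "prob (F a (i - a)) \<le> gi i ^ 2" if "i \<ge> i0" "a \<le> i" for a i
  proof -
    define x where "x = B (ln ((2::real) ^ i)) - \<delta>"
    have x: "x > 0" using goodi[OF that(1)] unfolding x_def by auto
    have ai: "a + (i - a) = i" using that by auto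
    have "prob (F a (i - a)) \<le> exp (- C * exp (- \<kappa> x)) ^ card ({1..(2::nat)^a} \<times> {1..(2::nat)^(i-a)})"
      unfolding F_def ai x_def[symmetric]
      by (rule rect_bound(2)[OF ind tail x]) (auto simp: Suc_le_eq)
    also have "card ({1..(2::nat)^a} \<times> {1..(2::nat)^(i-a)}) = 2 ^ i"
      by (simp add: card_cartesian_product power_add[symmetric] ai)
    also have "exp (- C * exp (- \<kappa> x)) ^ (2 ^ i) = exp (real (2 ^ i) * (- C * exp (- \<kappa> x)))"
      by (rule exp_of_nat_mult[symmetric])
    also have "\<dots> = gi i ^ 2"
      unfolding gi_def x_def[symmetric] by (simp add: power2_eq_square exp_add[symmetric] algebra_simps)
    finally show ?thesis .
  qed
  have Gb: "prob (G i) \<le> 4 * I ^ 2 * (1 / 2) ^ i" if "i \<ge> i0" for i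
  proof -
    have "prob (G i) \<le> (\<Sum>a\<in>{..i}. prob (F a (i - a)))"
      unfolding G_def by (rule measure_subadditive_finite) (use Fev in auto)
    also have "\<dots> \<le> (\<Sum>a\<in>{..i}. gi i ^ 2)" using Fb that by (intro sum_mono) auto
    also have "\<dots> = real (i + 1) * gi i ^ 2" by simp
    also have "\<dots> \<le> real (i + 1) * (2 * I / 2 ^ i) ^ 2"
    proof -
      have "gi i \<le> 2 * I / 2 ^ i" using gi_le[OF that] by (simp add: field_simps)
      moreover have "gi i \<ge> 0" unfolding gi_def by simp
      ultimately show ?thesis by (intro mult_left_mono power_mono) auto
    qed
    also have "\<dots> = 4 * I ^ 2 * (real (i + 1) / 2 ^ i) * (1 / 2) ^ i"
      by (simp add: field_simps power2_eq_square power_mult_distrib)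
    also have "\<dots> \<le> 4 * I ^ 2 * 1 * (1 / 2) ^ i"
    proof -
      have "i + 1 \<le> (2::nat) ^ i" using less_exp[of i] by (simp add: Suc_le_eq)
      then have "real (i + 1) \<le> 2 ^ i" by (metis of_nat_le_iff of_nat_numeral of_nat_power)
      then have "real (i + 1) / 2 ^ i \<le> 1" by simp
      then show ?thesis by (intro mult_right_mono mult_left_mono) auto
    qed
    finally show ?thesis by simp
  qed
  have summ: "summable (\<lambda>i. prob (G i))"
  proof (rule summable_comparison_test')
    show "summable (\<lambda>i. 4 * I ^ 2 * (1 / 2 :: real) ^ i)"
      by (intro summable_mult summable_geometric) auto
    show "norm (prob (G i)) \<le> 4 * I ^ 2 * (1 / 2) ^ i" if "i \<ge> i0" for i
      using Gb[OF that] by simp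
  qed
  have "AE \<omega> in M. eventually (\<lambda>i. \<omega> \<in> space M - G i) sequentially"
  proof (rule borel_cantelli_AE1)
    show "G i \<in> events" for i by (rule Gev)
    show "emeasure M (G i) < \<infinity>" for i
      by (simp add: emeasure_eq_measure)
    show "summable (\<lambda>i. prob (G i))" by (rule summ)
  qed
  then show ?thesis
  proof (rule AE_mp, intro AE_I2 impI)
    fix \<omega> assume \<omega>: "\<omega> \<in> space M" and ev: "eventually (\<lambda>i. \<omega> \<in> space M - G i) sequentially"
    then obtain i1 where i1: "\<And>i. i \<ge> i1 \<Longrightarrow> \<omega> \<notin> G i" by (auto simp: eventually_sequentially)
    define K where "K = max i0 i1"
    show "\<exists>N. \<forall>m j. 1 \<le> m \<longrightarrow> 1 \<le> j \<longrightarrow> max m j \<ge> N \<longrightarrow>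
           neg_part (Max {X k n \<omega> | k n. k \<in> {1..m} \<and> n \<in> {1..j}}
                      - B (ln (real (m * j)))) \<le> 2 * \<delta>"
    proof (intro exI[of _ "2 ^ K"] allI impI)
      fix m j :: nat assume m: "1 \<le> m" and j: "1 \<le> j" and mj: "max m j \<ge> 2 ^ K"
      obtain a where a: "2 ^ a \<le> m" "m < 2 ^ (a + 1)" using ex_power_ivl1[of 2 m] m by auto
      obtain c where c: "2 ^ c \<le> j" "j < 2 ^ (c + 1)" using ex_power_ivl1[of 2 j] j by auto
      define i where "i = a + c"
      have "K < a + 1 \<or> K < c + 1"
      proof (cases "m \<ge> j")
        case True
        then have "2 ^ K < (2::nat) ^ (a + 1)" using mj a by auto
        then have "K < a + 1" by (rule power_less_imp_less_exp[rotated]) simp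
        then show ?thesis by simp
      next
        case False
        then have "2 ^ K < (2::nat) ^ (c + 1)" using mj c by auto
        then have "K < c + 1" by (rule power_less_imp_less_exp[rotated]) simp
        then show ?thesis by simp
      qed
      then have iK: "i \<ge> K" unfolding i_def by auto
      then have ii0: "i \<ge> i0" and ii1: "i \<ge> i1" unfolding K_def by auto
      have sub: "F a (i - a) \<subseteq> G i" unfolding G_def by (rule UN_upper) (simp add: i_def)
      have ia: "i - a = c" by (simp add: i_def)
      have notF: "\<omega> \<notin> F a c" using i1[OF ii1] sub ia by auto
      have "\<not> (\<forall>k\<in>{1..2^a}. \<forall>n\<in>{1..2^c}. X k n \<omega> < B (ln ((2::real) ^ i)) - \<delta>)"
      proof
        assume H: "\<forall>k\<in>{1..2^a}. \<forall>n\<in>{1..2^c}. X k n \<omega> < B (ln ((2::real) ^ i)) - \<delta>"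
        have "\<omega> \<in> F a c" unfolding F_def i_def[symmetric] using \<omega> H by auto
        then show False using notF by contradiction
      qed
      then obtain k n where kn: "k \<in> {1..2^a}" "n \<in> {1..2^c}"
          and Xge: "X k n \<omega> \<ge> B (ln ((2::real) ^ i)) - \<delta>"
        by (auto simp: not_less)
      have Sfin: "finite {X k n \<omega> | k n. k \<in> {1..m} \<and> n \<in> {1..j}}"
      proof -
        have "{X k n \<omega> | k n. k \<in> {1..m} \<and> n \<in> {1..j}} = (\<lambda>(k, n). X k n \<omega>) ` ({1..m} \<times> {1..j})"
          by fastforce
        then show ?thesis by simp
      qed
      have "X k n \<omega> \<in> {X k n \<omega> | k n. k \<in> {1..m} \<and> n \<in> {1..j}}"
      proof -
        have "k \<in> {1..m}" "n \<in> {1..j}" using kn a c by auto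
        then show ?thesis by blast
      qed
      then have Mx: "X k n \<omega> \<le> Max {X k n \<omega> | k n. k \<in> {1..m} \<and> n \<in> {1..j}}"
        using Sfin by (intro Max_ge) auto
      have mjle: "real (m * j) \<le> 4 * 2 ^ i"
      proof -
        have "m * j \<le> 2 ^ (a + 1) * 2 ^ (c + 1)" using a c by (intro mult_mono) auto
        also have "\<dots> = 4 * 2 ^ i" unfolding i_def by (simp add: power_add)
        finally have "m * j \<le> 4 * 2 ^ i" .
        then have "real (m * j) \<le> real (4 * 2 ^ i)" by (rule of_nat_mono)
        then show ?thesis by simp
      qed
      have "m * j \<ge> 1" using m j by simp
      then have mj1: "real (m * j) \<ge> 1" by linarith
      have "ln (real (m * j)) \<le> ln (4 * 2 ^ i)" using mjle mj1 by simp
      also have "\<dots> = ln ((2::real) ^ i) + ln 4" by (simp add: ln_mult)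
      finally have "B (ln (real (m * j))) \<le> B (ln ((2::real) ^ i) + ln 4)"
        unfolding B_def using mj1 by (intro inv_pos_mono[OF phi]) auto
      also have "\<dots> \<le> B (ln ((2::real) ^ i)) + \<delta>" using goodi[OF ii0] by auto
      finally show "neg_part (Max {X k n \<omega> | k n. k \<in> {1..m} \<and> n \<in> {1..j}}
                      - B (ln (real (m * j)))) \<le> 2 * \<delta>"
        using Mx Xge d unfolding neg_part_def by auto
    qed
  qed
qed


theorem corollary2:
  fixes M :: "'a measure" and \<phi> p \<kappa> r C\<^sub>0 :: "real \<Rightarrow> real"
    and X :: "nat \<Rightarrow> nat \<Rightarrow> 'a \<Rightarrow> real" and C A \<epsilon>\<^sub>0 :: real
  assumes "prob_space M"
    and "orlicz_N_function \<phi>"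
    and "orlicz_density \<phi> p"
    and "prob_space.indep_vars M (\<lambda>_. borel) (\<lambda>(k, n). X k n) ({1::nat..} \<times> {1::nat..})"
    and "\<forall>k\<ge>1. \<forall>n\<ge>1. phi_subgaussian M \<phi> (X k n)"
    and "\<forall>k\<ge>1. \<forall>n\<ge>1. tau_phi M \<phi> (X k n) \<le> 1"
    and "\<forall>x>0. \<kappa> x > 0"
    and "strict_mono_on {0<..} \<kappa>"
    and "\<forall>x>0. (\<kappa> has_real_derivative r x) (at x)"
    and "mono_on {0<..} r"
    and "\<forall>x>0. young_fenchel \<phi> x - \<kappa> x \<ge> C\<^sub>0 x"
    and "C > 0"
    and "\<forall>k\<ge>1. \<forall>n\<ge>1. \<forall>x>0.
           measure M {\<omega> \<in> space M. X k n \<omega> < x} \<le> exp (- C * exp (- \<kappa> x))"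
    and "A > 0" and "\<epsilon>\<^sub>0 > 0"
    and "\<forall>\<epsilon>\<in>{0<..\<epsilon>\<^sub>0}.
           (\<integral>\<^sup>+ y. ennreal (exp (- (C * y / 2) *
               exp (- \<kappa> (inv_pos (young_fenchel \<phi>) (ln y) - \<epsilon>)))) * indicator {A..} y \<partial>lborel)
           < \<infinity>"
    and "\<forall>\<epsilon>\<in>{0<..\<epsilon>\<^sub>0}.
           (\<integral>\<^sup>+ y. ennreal (young_fenchel \<phi> y * gen_inv p y *
               exp (young_fenchel \<phi> y - C / 2 * exp (C\<^sub>0 y + \<epsilon> * r (y - \<epsilon>))))
             * indicator {A..} y \<partial>lborel)
           < \<infinity>"
  shows "AE \<omega> in M. \<forall>e>0. \<exists>N. \<forall>m j. 1 \<le> m \<longrightarrow> 1 \<le> j \<longrightarrow> max m j \<ge> N \<longrightarrow>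
           \<bar>neg_part (Max {X k n \<omega> | k n. k \<in> {1..m} \<and> n \<in> {1..j}}
                      - inv_pos (young_fenchel \<phi>) (ln (real (m * j)))) - 0\<bar> < e"
  proof -
  interpret P: prob_space M by (rule assms(1))
  define \<delta> where "\<delta> = (\<lambda>l::nat. \<epsilon>\<^sub>0 / real (Suc l))"
  have all: "\<forall>l. AE \<omega> in M. \<exists>N. \<forall>m j. 1 \<le> m \<longrightarrow> 1 \<le> j \<longrightarrow> max m j \<ge> N \<longrightarrow>
           neg_part (Max {X k n \<omega> | k n. k \<in> {1..m} \<and> n \<in> {1..j}}
                      - inv_pos (young_fenchel \<phi>) (ln (real (m * j)))) \<le> 2 * \<delta> l"
  proof
    fix l
    have dpos: "\<delta> l > 0" unfolding \<delta>_def using assms(15) by simp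
    have "\<delta> l / 2 \<in> {0<..\<epsilon>\<^sub>0}"
    proof -
      have "\<delta> l \<le> \<epsilon>\<^sub>0" unfolding \<delta>_def using assms(15)
        by (simp add: divide_le_eq)
      then show ?thesis using dpos by simp
    qed
    then have fin: "(\<integral>\<^sup>+ y. ennreal (exp (- (C * y / 2) *
               exp (- \<kappa> (inv_pos (young_fenchel \<phi>) (ln y) - \<delta> l / 2)))) * indicator {A..} y \<partial>lborel)
           < \<infinity>" using assms(16) by blast
    show "AE \<omega> in M. \<exists>N. \<forall>m j. 1 \<le> m \<longrightarrow> 1 \<le> j \<longrightarrow> max m j \<ge> N \<longrightarrow>
           neg_part (Max {X k n \<omega> | k n. k \<in> {1..m} \<and> n \<in> {1..j}}
                      - inv_pos (young_fenchel \<phi>) (ln (real (m * j)))) \<le> 2 * \<delta> l"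
      by (rule P.per_delta[OF assms(2) assms(4) assms(8) assms(12) assms(13) fin dpos])
  qed
  have "AE \<omega> in M. \<forall>l. \<exists>N. \<forall>m j. 1 \<le> m \<longrightarrow> 1 \<le> j \<longrightarrow> max m j \<ge> N \<longrightarrow>
           neg_part (Max {X k n \<omega> | k n. k \<in> {1..m} \<and> n \<in> {1..j}}
                      - inv_pos (young_fenchel \<phi>) (ln (real (m * j)))) \<le> 2 * \<delta> l"
    using all by (rule AE_all_countable[THEN iffD2])
  then show ?thesis
  proof (rule AE_mp, intro AE_I2 impI allI)
    fix \<omega> and e :: real
    assume H: "\<forall>l. \<exists>N. \<forall>m j. 1 \<le> m \<longrightarrow> 1 \<le> j \<longrightarrow> max m j \<ge> N \<longrightarrow>
           neg_part (Max {X k n \<omega> | k n. k \<in> {1..m} \<and> n \<in> {1..j}}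
                      - inv_pos (young_fenchel \<phi>) (ln (real (m * j)))) \<le> 2 * \<delta> l"
      and e: "0 < e"
    obtain l :: nat where l: "2 * \<epsilon>\<^sub>0 / e < real l" using reals_Archimedean2 by blast
    have "2 * \<epsilon>\<^sub>0 < e * real l" using l e by (simp add: field_simps)
    also have "\<dots> \<le> e * real (Suc l)" using e by simp
    finally have dl: "2 * \<delta> l < e" unfolding \<delta>_def by (simp add: field_simps)
    from H obtain N where N: "\<forall>m j. 1 \<le> m \<longrightarrow> 1 \<le> j \<longrightarrow> max m j \<ge> N \<longrightarrow>
           neg_part (Max {X k n \<omega> | k n. k \<in> {1..m} \<and> n \<in> {1..j}}
                      - inv_pos (young_fenchel \<phi>) (ln (real (m * j)))) \<le> 2 * \<delta> l" by blast
    show "\<exists>N. \<forall>m j. 1 \<le> m \<longrightarrow> 1 \<le> j \<longrightarrow> max m j \<ge> N \<longrightarrow>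
           \<bar>neg_part (Max {X k n \<omega> | k n. k \<in> {1..m} \<and> n \<in> {1..j}}
                      - inv_pos (young_fenchel \<phi>) (ln (real (m * j)))) - 0\<bar> < e"
    proof (intro exI[of _ N] allI impI)
      fix m j :: nat assume "1 \<le> m" "1 \<le> j" "max m j \<ge> N"
      then have "neg_part (Max {X k n \<omega> | k n. k \<in> {1..m} \<and> n \<in> {1..j}}
                      - inv_pos (young_fenchel \<phi>) (ln (real (m * j)))) \<le> 2 * \<delta> l" using N by blast
      moreover have "neg_part u \<ge> 0" for u unfolding neg_part_def by simp
      ultimately show "\<bar>neg_part (Max {X k n \<omega> | k n. k \<in> {1..m} \<and> n \<in> {1..j}}
                      - inv_pos (young_fenchel \<phi>) (ln (real (m * j)))) - 0\<bar> < e"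
        using dl by (smt (verit))
    qed
  qed
qed

end
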